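(* The relation $\{(\rho,\sigma,\pi):\rho,\sigma,\pi\text{ are total and }|\rho|+|\sigma|=|\pi|\}$ is $\Pi_3$-definable in $\mathbf Y^*=\langle\mathcal P,\le,[1]+[1]\rangle$.
   Context: $\mathcal P$ is the set of all integer partitions, including the empty partition $\emptyset$; a partition is a nonincreasing finite sequence of positive integers (its parts), and $|\pi|$ is the sum of its parts. A partition is total if it has exactly one part; $\emptyset$ also counts as total. Young's lattice $\mathbf Y=\langle\mathcal P,\le\rangle$ has $(s_1,\dots,s_r)\le(n_1,\dots,n_t)$ iff $r\le t$ and $s_i\le n_i$ for all $i\le r$; $\mathbf Y^*$ is $\mathbf Y$ with a constant symbol for the partition $(1,1)$. A relation is $\Pi_n$-definable if it is defined by a first-order formula in the language $\{\le,(1,1)\}$ in prenex form with $n$ alternating quantifier blocks, the outermost universal, and a quantifier-free matrix. *)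

theory Defs
  imports Main
begin

definition is_partition :: "nat list \<Rightarrow> bool" where
  "is_partition xs \<longleftrightarrow> sorted_wrt (\<ge>) xs \<and> (\<forall>x\<in>set xs. 0 < x)"

definition psize :: "nat list \<Rightarrow> nat" where
  "psize xs = sum_list xs"

definition total_part :: "nat list \<Rightarrow> bool" where
  "total_part xs \<longleftrightarrow> length xs \<le> 1"

definition young_le :: "nat list \<Rightarrow> nat list \<Rightarrow> bool" where
  "young_le s n \<longleftrightarrow> length s \<le> length n \<and> (\<forall>i<length s. s ! i \<le> n ! i)"

datatype tm = Var nat | C11

datatype fm =
    Le tm tm
  | Eq tm tm
  | Neg fm
  | Conj fm fm
  | Disj fm fm
  | Ex nat fm
  | All nat fm

fun eval_tm :: "(nat \<Rightarrow> nat list) \<Rightarrow> tm \<Rightarrow> nat list" where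
  "eval_tm e (Var i) = e i"
| "eval_tm e C11 = [1, 1]"

fun sat :: "(nat \<Rightarrow> nat list) \<Rightarrow> fm \<Rightarrow> bool" where
  "sat e (Le a b) = young_le (eval_tm e a) (eval_tm e b)"
| "sat e (Eq a b) = (eval_tm e a = eval_tm e b)"
| "sat e (Neg f) = (\<not> sat e f)"
| "sat e (Conj f g) = (sat e f \<and> sat e g)"
| "sat e (Disj f g) = (sat e f \<or> sat e g)"
| "sat e (Ex x f) = (\<exists>p. is_partition p \<and> sat (e(x := p)) f)"
| "sat e (All x f) = (\<forall>p. is_partition p \<longrightarrow> sat (e(x := p)) f)"

fun qfree :: "fm \<Rightarrow> bool" where
  "qfree (Le a b) = True"
| "qfree (Eq a b) = True"
| "qfree (Neg f) = qfree f"
| "qfree (Conj f g) = (qfree f \<and> qfree g)"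
| "qfree (Disj f g) = (qfree f \<and> qfree g)"
| "qfree (Ex x f) = False"
| "qfree (All x f) = False"

definition Alls :: "nat list \<Rightarrow> fm \<Rightarrow> fm" where
  "Alls xs f = foldr All xs f"

definition Exs :: "nat list \<Rightarrow> fm \<Rightarrow> fm" where
  "Exs xs f = foldr Ex xs f"

inductive pi_fm :: "nat \<Rightarrow> fm \<Rightarrow> bool" and sigma_fm :: "nat \<Rightarrow> fm \<Rightarrow> bool" where
  pi0: "qfree f \<Longrightarrow> pi_fm 0 f"
| sigma0: "qfree f \<Longrightarrow> sigma_fm 0 f"
| piS: "sigma_fm n f \<Longrightarrow> pi_fm (Suc n) (Alls xs f)"
| sigmaS: "pi_fm n f \<Longrightarrow> sigma_fm (Suc n) (Exs xs f)"

definition pi_definable3 :: "nat \<Rightarrow> (nat list \<Rightarrow> nat list \<Rightarrow> nat list \<Rightarrow> bool) \<Rightarrow> bool" where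
  "pi_definable3 n R \<longleftrightarrow>
     (\<exists>f. pi_fm n f \<and>
        (\<forall>e. (\<forall>i. is_partition (e i)) \<longrightarrow> (sat e f \<longleftrightarrow> R (e 0) (e 1) (e 2))))"

end

theory Submission
  imports Defs
begin


definition fv :: "nat list \<Rightarrow> nat \<Rightarrow> nat" where
  "fv x i = (if i < length x then x!i else 0)"

lemma part_pos: "is_partition x \<Longrightarrow> i < length x \<Longrightarrow> 0 < x!i"
  unfolding is_partition_def by (auto simp: nth_mem)

lemma part_mono: "is_partition x \<Longrightarrow> i \<le> j \<Longrightarrow> fv x j \<le> fv x i"
  unfolding is_partition_def fv_def
  by (cases "i = j") (auto simp: sorted_wrt_iff_nth_less)

lemma part_le_iff:
  assumes "is_partition x" shows "young_le x y \<longleftrightarrow> (\<forall>i. fv x i \<le> fv y i)"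
proof
  assume "young_le x y" then show "\<forall>i. fv x i \<le> fv y i"
    unfolding young_le_def fv_def by auto
next
  assume H: "\<forall>i. fv x i \<le> fv y i"
  have L: "length x \<le> length y"
  proof (rule ccontr)
    assume "\<not> length x \<le> length y"
    then have "0 < fv x (length y)" using part_pos[OF assms] by (auto simp: fv_def)
    moreover have "fv y (length y) = 0" by (simp add: fv_def)
    ultimately show False using H by (metis not_le)
  qed
  show "young_le x y" unfolding young_le_def
  proof (intro conjI L allI impI)
    fix i assume "i < length x"
    then show "x!i \<le> y!i" using H[rule_format, of i] L by (auto simp: fv_def)
  qed
qed

lemma part_eq:
  assumes "is_partition x" "is_partition y" "\<And>i. fv x i = fv y i" shows "x = y"
proof -
  have "young_le x y" "young_le y x" using assms part_le_iff by auto
  then have "length x = length y" unfolding young_le_def by auto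
  then show ?thesis using assms(3) by (metis fv_def nth_equalityI)
qed

lemma fv_zero: "length x \<le> i \<Longrightarrow> fv x i = 0" by (simp add: fv_def)

definition mk :: "(nat \<Rightarrow> nat) \<Rightarrow> nat list" where
  "mk g = map g [0..<(LEAST i. g i = 0)]"

lemma mk:
  assumes mono: "\<And>i j. i \<le> j \<Longrightarrow> g j \<le> g i" and z: "g N = 0"
  shows "is_partition (mk g)" "fv (mk g) = g"
proof -
  define L where "L = (LEAST i. g i = 0)"
  have gL: "g L = 0" unfolding L_def by (rule LeastI[of _ N]) (rule z)
  have lt: "i < L \<Longrightarrow> 0 < g i" for i unfolding L_def using not_less_Least by blast
  have ge: "L \<le> i \<Longrightarrow> g i = 0" for i using mono[of L i] gL by simp
  show "is_partition (mk g)" unfolding is_partition_def mk_def L_def[symmetric]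
    using lt mono by (auto simp: sorted_wrt_iff_nth_less)
  show "fv (mk g) = g" unfolding mk_def L_def[symmetric]
    using ge by (auto simp: fv_def fun_eq_iff)
qed

definition tp :: "nat \<Rightarrow> nat list" where "tp k = (if k = 0 then [] else [k])"

lemma tp_part: "is_partition (tp k)" by (simp add: tp_def is_partition_def)
lemma fv_tp: "fv (tp k) i = (if i = 0 then k else 0)" by (simp add: tp_def fv_def)

lemma tot_iff: "is_partition x \<Longrightarrow> (\<not> young_le [1,1] x) \<longleftrightarrow> (\<exists>k. x = tp k)"
proof -
  assume P: "is_partition x"
  have "(\<not> young_le [1,1] x) \<longleftrightarrow> length x \<le> 1"
    using part_pos[OF P, of 0] part_pos[OF P, of 1] apply (auto simp: young_le_def less_Suc_eq)
    apply (cases x, simp, simp)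
    by (meson not_less)
  also have "\<dots> \<longleftrightarrow> (\<exists>k. x = tp k)"
  proof
    assume "length x \<le> 1" then show "\<exists>k. x = tp k"
      using part_pos[OF P, of 0]
      by (cases x) (auto simp: tp_def intro!: exI[of _ "x!0"])
  next
    assume "\<exists>k. x = tp k" then show "length x \<le> 1" by (auto simp: tp_def)
  qed
  finally show ?thesis .
qed

lemma tp_le_iff: "young_le (tp k) y \<longleftrightarrow> k \<le> fv y 0"
  by (cases y) (auto simp: young_le_def tp_def fv_def)

lemma fv_tp0: "fv (tp k) 0 = k" by (simp add: fv_tp)



definition ltp :: "nat list \<Rightarrow> nat list \<Rightarrow> bool" where
  "ltp x y \<longleftrightarrow> young_le x y \<and> x \<noteq> y"

definition Dom :: "nat list \<Rightarrow> nat list \<Rightarrow> nat list \<Rightarrow> bool" where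
  "Dom u v S \<longleftrightarrow> ltp u v \<and> ltp v S \<and> (\<forall>w. is_partition w \<longrightarrow> ltp u w \<longrightarrow> ltp w S \<longrightarrow> w = v)"

definition St :: "nat list \<Rightarrow> bool" where
  "St S \<longleftrightarrow> \<not> (\<exists>u v. is_partition u \<and> is_partition v \<and> Dom u v S)"

definition stair :: "nat \<Rightarrow> nat list" where
  "stair n = map (\<lambda>i. n - i) [0..<n]"

lemma stair_part: "is_partition (stair n)"
  by (auto simp: stair_def is_partition_def sorted_wrt_iff_nth_less)

lemma fv_stair: "fv (stair n) i = n - i"
  by (simp add: stair_def fv_def)

lemma ltp_fv: "is_partition x \<Longrightarrow> is_partition y \<Longrightarrow>
   ltp x y \<longleftrightarrow> (\<forall>i. fv x i \<le> fv y i) \<and> fv x \<noteq> fv y"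
proof -
  assume px: "is_partition x" and py: "is_partition y"
  have "x = y \<longleftrightarrow> fv x = fv y" using part_eq[OF px py] by auto
  then show ?thesis unfolding ltp_def part_le_iff[OF px] by simp
qed

lemma between:
  fixes fu fw fy :: "nat \<Rightarrow> nat"
  assumes "\<And>j. fu j \<le> fw j" "\<And>j. fw j \<le> fy j" "fy = fu(k := fu k + 1)"
  shows "fw = fu \<or> fw = fy"
proof (cases "fw k = fu k")
  case True
  have "fw x = fu x" for x using assms(1)[of x] assms(2)[of x] True assms(3) by (cases "x=k") auto
  then have "fw = fu" by auto
  then show ?thesis by simp
next
  case False
  then have "fw k = fu k + 1" using assms(1)[of k] assms(2)[of k] assms(3) by simp
  have "fw x = fy x" for x using assms(1)[of x] assms(2)[of x] \<open>fw k = fu k + 1\<close> assms(3) by (cases "x=k") auto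
  then have "fw = fy" by auto
  then show ?thesis by simp
qed

lemma part_fv_mono: "is_partition x \<Longrightarrow> \<forall>i j. i \<le> j \<longrightarrow> fv x j \<le> fv x i"
  using part_mono by blast

lemma mk_fv: "is_partition x \<Longrightarrow> mk (fv x) = x"
proof -
  assume px: "is_partition x"
  have m: "\<And>i j. i \<le> j \<Longrightarrow> fv x j \<le> fv x i" using part_mono[OF px] .
  have z: "fv x (length x) = 0" by (simp add: fv_zero)
  show ?thesis using mk(1)[of "fv x" "length x", OF m z] mk(2)[of "fv x" "length x", OF m z] part_eq[OF _ px] by metis
qed

lemma stair_St: "St (stair n)"
  unfolding St_def
proof
  assume "\<exists>u v. is_partition u \<and> is_partition v \<and> Dom u v (stair n)"
  then obtain u v where pu: "is_partition u" and pv: "is_partition v" and D: "Dom u v (stair n)" by blast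
  define g where "g = (\<lambda>i::nat. n - i)"
  have fg: "fv (stair n) = g" by (simp add: fv_stair g_def fun_eq_iff)
  note ps = stair_part[of n]
  from D have uv: "ltp u v" and vs: "ltp v (stair n)"
    and uniq: "\<And>w. is_partition w \<Longrightarrow> ltp u w \<Longrightarrow> ltp w (stair n) \<Longrightarrow> w = v"
    unfolding Dom_def by auto
  have uv': "\<forall>i. fv u i \<le> fv v i" "fv u \<noteq> fv v" using uv ltp_fv pu pv by auto
  have vs': "\<forall>i. fv v i \<le> g i" "fv v \<noteq> g" using vs ltp_fv pv ps fg by auto
  define fu where "fu = fv u"
  have fug: "\<And>i. fu i \<le> g i" using uv' vs' fu_def le_trans by blast
  have fune: "fu \<noteq> g"
  proof
    assume "fu = g"
    then have "fv v = g" using uv'(1) vs'(1) fu_def by (auto simp: fun_eq_iff intro: le_antisym)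
    then show False using vs' by simp
  qed
  define DD where "DD = {i. fu i < g i}"
  have DDfin: "finite DD" unfolding DD_def g_def
    by (rule finite_subset[of _ "{..<n}"]) auto
  have DDne: "DD \<noteq> {}"
  proof
    assume "DD = {}"
    then have "\<And>i. fu i = g i" unfolding DD_def using fug le_neq_implies_less by blast
    then show False using fune by auto
  qed
  define i0 where "i0 = Max DD"
  define i1 where "i1 = Min DD"
  have i0D: "i0 \<in> DD" and i1D: "i1 \<in> DD" using DDfin DDne i0_def i1_def by auto
  have i0max: "\<And>i. i0 < i \<Longrightarrow> fu i = g i"
  proof -
    fix i assume "i0 < i"
    then have "i \<notin> DD" using Max_ge[OF DDfin, of i] unfolding i0_def by auto
    then show "fu i = g i" using fug[of i] unfolding DD_def by auto
  qed
  have i1min: "\<And>i. i < i1 \<Longrightarrow> fu i = g i"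
  proof -
    fix i assume "i < i1"
    then have "i \<notin> DD" using Min_le[OF DDfin, of i] unfolding i1_def by auto
    then show "fu i = g i" using fug[of i] unfolding DD_def by auto
  qed
  have i10: "i1 \<le> i0" using DDfin i0D i1D i0_def i1_def by simp
  have i0n: "i0 < n" using i0D unfolding DD_def g_def by simp
  have mfu: "\<And>i j. i \<le> j \<Longrightarrow> fu j \<le> fu i" using part_mono[OF pu] fu_def by simp
  have remst: "is_partition (mk (g(k := g k - 1))) \<and> fv (mk (g(k := g k - 1))) = g(k := g k - 1)"
    if "k < n" for k
  proof -
    have "\<And>i j. i \<le> j \<Longrightarrow> (g(k := g k - 1)) j \<le> (g(k := g k - 1)) i"
      using that unfolding g_def by auto
    moreover have "(g(k := g k - 1)) (Suc n) = 0" using that by (simp add: g_def)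
    ultimately show ?thesis using mk by blast
  qed
  have lt_g: "ltp w (stair n)" if "is_partition w" "\<forall>i. fv w i \<le> g i" "fv w \<noteq> g" for w
    using ltp_fv[OF that(1) ps] that fg by simp
  have lt_u: "ltp u w" if "is_partition w" "\<forall>i. fu i \<le> fv w i" "fu \<noteq> fv w" for w
    using ltp_fv[OF pu that(1)] that fu_def by simp
  have vv: "fv v = fv w" if "is_partition w" "ltp u w" "ltp w (stair n)" for w
    using uniq that by simp
  define h1 where "h1 = g(i0 := g i0 - 1)"
  obtain p1 where p1: "is_partition p1" "fv p1 = h1" using remst[OF i0n] h1_def by blast
  have h1u: "\<forall>i. fu i \<le> h1 i" using fug i0D unfolding h1_def DD_def by auto
  have h1g: "\<forall>i. h1 i \<le> g i" "h1 \<noteq> g" using i0n unfolding h1_def g_def by (auto simp: fun_eq_iff)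
  have h1nu: "h1 \<noteq> fu"
  proof
    assume e: "h1 = fu"
    have "g x = (fu(i0 := fu i0 + 1)) x" for x
      using fun_cong[OF e, of x] i0n unfolding h1_def g_def by (cases "x = i0") auto
    then have "g = fu(i0 := fu i0 + 1)" by auto
    then have "fv v = fu \<or> fv v = g" using between[of fu "fv v" g i0] uv'(1) vs'(1) fu_def by auto
    then show False using uv' vs' fu_def by auto
  qed
  have vh1: "fv v = h1"
    using vv[of p1] p1 lt_g[of p1] lt_u[of p1] h1u h1g h1nu by auto
  define h2 where "h2 = fu(i1 := fu i1 + 1)"
  have i1n: "i1 < n" using i1D unfolding DD_def g_def by simp
  have h2mono: "\<And>i j. i \<le> j \<Longrightarrow> h2 j \<le> h2 i"
  proof -
    fix i j :: nat assume ij: "i \<le> j"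
    have A: "i < i1 \<Longrightarrow> fu i1 + 1 \<le> fu i" using i1min[of i] i1D unfolding DD_def g_def by auto
    show "h2 j \<le> h2 i" unfolding h2_def using ij A mfu[OF ij] mfu[of i1 j] mfu[of i i1]
      by (cases "i = i1"; cases "j = i1") (auto simp: le_less)
  qed
  have h2z: "h2 (Suc (length u + i1)) = 0" unfolding h2_def fu_def by (simp add: fv_zero)
  obtain p2 where p2: "is_partition p2" "fv p2 = h2" using mk[of h2 "Suc (length u + i1)", OF h2mono h2z] by blast
  have h2u: "\<forall>i. fu i \<le> h2 i" "fu \<noteq> h2" unfolding h2_def by (auto simp: fun_eq_iff)
  have h2g: "\<forall>i. h2 i \<le> g i" using fug i1D unfolding h2_def DD_def by auto
  have h2ng: "h2 \<noteq> g"
  proof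
    assume e: "h2 = g"
    have "g = fu(i1 := fu i1 + 1)" using e h2_def by simp
    then have "fv v = fu \<or> fv v = g" using between[of fu "fv v" g i1] uv'(1) vs'(1) fu_def by auto
    then show False using uv' vs' fu_def by auto
  qed
  have vh2: "fv v = h2"
    using vv[of p2] p2 lt_g[of p2] lt_u[of p2] h2u h2g h2ng by auto
  have h12: "h1 = h2" using vh1 vh2 by simp
  show False
  proof (cases "i0 = i1")
    case True
    have a: "h1 i0 = h2 i0" using h12 by simp
    have "fu (Suc i0) = g (Suc i0)" using i0max by simp
    moreover have "fu (Suc i0) \<le> fu i0" using mfu by simp
    ultimately show False using a True i0n unfolding h1_def h2_def g_def by auto
  next
    case False
    then have lt: "i1 < i0" using i10 by simp
    have a1: "fu i1 + 1 = g i1" using fun_cong[OF h12, of i1] lt unfolding h1_def h2_def by auto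
    have a0: "fu i0 = g i0 - 1" using fun_cong[OF h12, of i0] lt unfolding h1_def h2_def by auto
    define h3 where "h3 = g(i1 := g i1 - 1)"
    obtain p3 where p3: "is_partition p3" "fv p3 = h3" using remst[OF i1n] h3_def by blast
    have h3u: "\<forall>i. fu i \<le> h3 i" using fug a1 unfolding h3_def by auto
    have h3g: "\<forall>i. h3 i \<le> g i" "h3 \<noteq> g" using i1n unfolding h3_def g_def by (auto simp: fun_eq_iff)
    have h3nu: "h3 \<noteq> fu"
    proof
      assume "h3 = fu"
      then have "h3 i0 = fu i0" by simp
      then show False using a0 lt i0n unfolding h3_def g_def by auto
    qed
    have "fv v = h3"
      using vv[of p3] p3 lt_g[of p3] lt_u[of p3] h3u h3g h3nu by auto
    then have "h3 i1 = h1 i1" using vh1 by simp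
    then show False using lt i1n unfolding h3_def h1_def g_def by auto
  qed
qed



lemma upd_eq1: "(\<And>j. j \<noteq> i \<Longrightarrow> f j = g j) \<Longrightarrow> f i = a \<Longrightarrow> f = g(i := a)"
  by (rule ext) auto

lemma upd_eq2: "(\<And>j. j \<noteq> i \<Longrightarrow> j \<noteq> k \<Longrightarrow> f j = g j) \<Longrightarrow> f i = a \<Longrightarrow> f k = b \<Longrightarrow> i \<noteq> k
   \<Longrightarrow> f = g(i := a, k := b)"
  by (rule ext) auto

lemma St_stair:
  assumes py: "is_partition y" and St: "St y"
  shows "y = stair (length y)"
proof -
  define g where "g = fv y"
  define L where "L = length y"
  have mg: "\<And>i j. i \<le> j \<Longrightarrow> g j \<le> g i" using part_mono[OF py] g_def by simp
  have gL: "\<And>i. L \<le> i \<Longrightarrow> g i = 0" using fv_zero g_def L_def by simp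
  have gpos: "\<And>i. i < L \<Longrightarrow> 0 < g i" using part_pos[OF py] g_def L_def fv_def by simp
  have noD: "\<not> Dom u v y" if "is_partition u" "is_partition v" for u v
    using St that unfolding St_def by blast
  have ltg: "ltp w y \<longleftrightarrow> (\<forall>i. fv w i \<le> g i) \<and> fv w \<noteq> g" if "is_partition w" for w
    using ltp_fv[OF that py] g_def by simp
  \<comment> \<open>(a) no horizontal domino\<close>
  have a: "\<not> (g (Suc i) + 2 \<le> g i)" for i
  proof
    assume H: "g (Suc i) + 2 \<le> g i"
    define hu where "hu = g(i := g i - 2)"
    define hv where "hv = g(i := g i - 1)"
    have "g i \<noteq> 0" using H by simp
    then have iL: "i < L" using gL[of i] by (meson not_less)
    have mu: "\<And>a b. a \<le> b \<Longrightarrow> hu b \<le> hu a"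
    proof -
      fix a b :: nat assume ab: "a \<le> b"
      show "hu b \<le> hu a" unfolding hu_def using ab mg[OF ab] mg[of "Suc i" b] mg[of a i] H
        by (cases "a = i"; cases "b = i") (auto simp: Suc_le_eq)
    qed
    have mv: "\<And>a b. a \<le> b \<Longrightarrow> hv b \<le> hv a"
    proof -
      fix a b :: nat assume ab: "a \<le> b"
      show "hv b \<le> hv a" unfolding hv_def using ab mg[OF ab] mg[of "Suc i" b] mg[of a i] H
        by (cases "a = i"; cases "b = i") (auto simp: Suc_le_eq)
    qed
    have zu: "hu L = 0" and zv: "hv L = 0" using iL gL unfolding hu_def hv_def by auto
    obtain u where pu: "is_partition u" "fv u = hu" using mk[of hu L, OF mu zu] by blast
    obtain v where pv: "is_partition v" "fv v = hv" using mk[of hv L, OF mv zv] by blast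
    have "Dom u v y" unfolding Dom_def
    proof (intro conjI allI impI)
      have "\<forall>j. hu j \<le> hv j" "\<forall>j. hv j \<le> g j" unfolding hu_def hv_def by simp_all
      moreover have "hu i \<noteq> hv i" "hv i \<noteq> g i" using H unfolding hu_def hv_def by simp_all
      then have "hu \<noteq> hv" "hv \<noteq> g" by auto
      ultimately show "ltp u v" "ltp v y" using ltp_fv[OF pu(1) pv(1)] ltg[OF pv(1)] pu pv by simp_all
      fix w assume pw: "is_partition w" and uw: "ltp u w" and wy: "ltp w y"
      have 1: "\<forall>j. hu j \<le> fv w j" "hu \<noteq> fv w" using ltp_fv[OF pu(1) pw] uw pu by simp_all
      have 2: "\<forall>j. fv w j \<le> g j" "fv w \<noteq> g" using ltg[OF pw] wy by simp_all
      have o: "fv w j = g j" if "j \<noteq> i" for j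
      proof -
        have "hu j = g j" using that unfolding hu_def by simp
        then show ?thesis using 1(1) 2(1) le_antisym by metis
      qed
      have lo: "g i - 2 \<le> fv w i"
      proof -
        have "hu i = g i - 2" unfolding hu_def by simp
        then show ?thesis using 1(1) by metis
      qed
      have hi: "fv w i \<le> g i" using 2(1) by blast
      have n1: "fv w i \<noteq> g i - 2"
      proof
        assume "fv w i = g i - 2"
        then have "fv w = g(i := g i - 2)" using upd_eq1[of i "fv w" g] o by blast
        then show False using 1(2) unfolding hu_def by simp
      qed
      have n2: "fv w i \<noteq> g i"
      proof
        assume "fv w i = g i"
        then have "fv w = g(i := g i)" using upd_eq1[of i "fv w" g] o by blast
        then show False using 2(2) by simp
      qed
      have "fv w i = g i - 1" using lo hi n1 n2 H by linarith
      then have "fv w = g(i := g i - 1)" using upd_eq1[of i "fv w" g] o by blast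
      then have "fv w = fv v" using pv unfolding hv_def by simp
      then show "w = v" using part_eq[OF pw pv(1)] by simp
    qed
    then show False using noD[OF pu(1) pv(1)] by simp
  qed
  \<comment> \<open>(b) no vertical domino\<close>
  have b: "\<not> (0 < g (Suc i) \<and> g i = g (Suc i) \<and> g (Suc (Suc i)) < g (Suc i))" for i
  proof
    assume H: "0 < g (Suc i) \<and> g i = g (Suc i) \<and> g (Suc (Suc i)) < g (Suc i)"
    define hu where "hu = g(i := g i - 1, Suc i := g (Suc i) - 1)"
    define hv where "hv = g(Suc i := g (Suc i) - 1)"
    have iL: "Suc i < L" using H gL[of "Suc i"] by (cases "Suc i < L") auto
    have mu: "\<And>a b. a \<le> b \<Longrightarrow> hu b \<le> hu a"
    proof -
      fix a b :: nat assume ab: "a \<le> b"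
      show "hu b \<le> hu a" unfolding hu_def using ab mg[OF ab] mg[of "Suc (Suc i)" b] mg[of a i] H
        by (cases "a = i"; cases "b = i"; cases "a = Suc i"; cases "b = Suc i") (auto simp: Suc_le_eq)
    qed
    have mv: "\<And>a b. a \<le> b \<Longrightarrow> hv b \<le> hv a"
    proof -
      fix a b :: nat assume ab: "a \<le> b"
      show "hv b \<le> hv a" unfolding hv_def using ab mg[OF ab] mg[of "Suc (Suc i)" b] mg[of a i] H
        by (cases "a = Suc i"; cases "b = Suc i") (auto simp: Suc_le_eq)
    qed
    have zu: "hu L = 0" and zv: "hv L = 0" using iL gL unfolding hu_def hv_def by auto
    obtain u where pu: "is_partition u" "fv u = hu" using mk[of hu L, OF mu zu] by blast
    obtain v where pv: "is_partition v" "fv v = hv" using mk[of hv L, OF mv zv] by blast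
    have "Dom u v y" unfolding Dom_def
    proof (intro conjI allI impI)
      have "\<forall>j. hu j \<le> hv j" "\<forall>j. hv j \<le> g j" unfolding hu_def hv_def by simp_all
      moreover have "hu i \<noteq> hv i" "hv (Suc i) \<noteq> g (Suc i)" using H unfolding hu_def hv_def by auto
      then have "hu \<noteq> hv" "hv \<noteq> g" by auto
      ultimately show "ltp u v" "ltp v y" using ltp_fv[OF pu(1) pv(1)] ltg[OF pv(1)] pu pv by simp_all
      fix w assume pw: "is_partition w" and uw: "ltp u w" and wy: "ltp w y"
      have 1: "\<forall>j. hu j \<le> fv w j" "hu \<noteq> fv w" using ltp_fv[OF pu(1) pw] uw pu by simp_all
      have 2: "\<forall>j. fv w j \<le> g j" "fv w \<noteq> g" using ltg[OF pw] wy by simp_all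
      have o: "fv w j = g j" if "j \<noteq> i" "j \<noteq> Suc i" for j
      proof -
        have "hu j = g j" using that unfolding hu_def by simp
        then show ?thesis using 1(1) 2(1) le_antisym by metis
      qed
      have mw: "fv w (Suc i) \<le> fv w i" using part_mono[OF pw] by simp
      have "hu i = g i - 1" "hu (Suc i) = g (Suc i) - 1" unfolding hu_def by simp_all
      then have l1: "g i - 1 \<le> fv w i" and l2: "g (Suc i) - 1 \<le> fv w (Suc i)" using 1(1) by metis+
      have u1: "fv w i \<le> g i" and u2: "fv w (Suc i) \<le> g (Suc i)" using 2(1) by blast+
      have ne: "i \<noteq> Suc i" by simp
      have "fv w = fv v"
      proof (cases "fv w i = g i")
        case True
        show ?thesis
        proof (cases "fv w (Suc i) = g (Suc i)")
          case True2: True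
          then have "fv w = g(i := g i, Suc i := g (Suc i))" using upd_eq2[of i "Suc i" "fv w" g, OF o True True2 ne] by blast
          then show ?thesis using 2(2) by simp
        next
          case False
          then have "fv w (Suc i) = g (Suc i) - 1" using l2 u2 by linarith
          then have "fv w = g(i := g i, Suc i := g (Suc i) - 1)" using upd_eq2[of i "Suc i" "fv w" g "g i", OF o True _ ne] by blast
          then show ?thesis using pv unfolding hv_def by simp
        qed
      next
        case False
        then have wi: "fv w i = g i - 1" using l1 u1 by linarith
        then have "fv w (Suc i) = g (Suc i) - 1" using mw H l2 u2 by linarith
        then have "fv w = g(i := g i - 1, Suc i := g (Suc i) - 1)" using upd_eq2[of i "Suc i" "fv w" g, OF o wi _ ne] by blast
        then show ?thesis using 1(2) unfolding hu_def by simp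
      qed
      then show "w = v" using part_eq[OF pw pv(1)] by simp
    qed
    then show False using noD[OF pu(1) pv(1)] by simp
  qed
  have c: "k < L \<Longrightarrow> g (L - 1 - k) = k + 1 \<and> g (L - k) = k" for k
  proof (induction k)
    case 0
    have "g (Suc (L - 1)) = 0" using gL 0 by simp
    then have "g (L - 1) \<le> 1" using a[of "L - 1"] by simp
    then show ?case using gpos[of "L - 1"] 0 gL by auto
  next
    case (Suc k)
    then have IH: "g (L - 1 - k) = k + 1" "g (L - k) = k" by auto
    define i where "i = L - 2 - k"
    have i1: "Suc i = L - 1 - k" and i2: "Suc (Suc i) = L - k" using Suc.prems i_def by auto
    have "g i \<noteq> g (Suc i)" using b[of i] IH i1 i2 by auto
    moreover have "g (Suc i) \<le> g i" using mg by simp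
    moreover have "g i < g (Suc i) + 2" using a[of i] by simp
    ultimately have "g i = k + 2" using IH i1 by auto
    moreover have "L - 1 - Suc k = i" "L - Suc k = Suc i" using Suc.prems i_def by auto
    ultimately show ?case using IH i1 by simp
  qed
  have "fv y i = fv (stair L) i" for i
  proof (cases "i < L")
    case True
    have "g (L - 1 - (L - 1 - i)) = L - 1 - i + 1" using c[of "L - 1 - i"] True by simp
    then show ?thesis using True g_def fv_stair by simp
  next
    case False
    then show ?thesis using gL g_def fv_stair by simp
  qed
  then show ?thesis using part_eq[OF py stair_part] L_def by simp
qed

lemma St_iff: "is_partition y \<Longrightarrow> St y \<longleftrightarrow> (\<exists>n. y = stair n)"
  using St_stair stair_St by blast



definition tot :: "nat list \<Rightarrow> bool" where "tot x \<longleftrightarrow> \<not> young_le [1,1] x"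

definition sT2 :: "nat list \<Rightarrow> bool" where
  "sT2 T \<longleftrightarrow> tot T \<and> \<not> young_le T [1,1] \<and> (\<forall>s. is_partition s \<longrightarrow> tot s \<and> \<not> young_le s [1,1] \<longrightarrow> young_le T s)"

definition sSucc :: "nat list \<Rightarrow> nat list \<Rightarrow> bool" where
  "sSucc r A \<longleftrightarrow> tot A \<and> ltp r A \<and> (\<forall>s. is_partition s \<longrightarrow> tot s \<and> ltp r s \<longrightarrow> young_le A s)"

definition sSt :: "nat list \<Rightarrow> nat list \<Rightarrow> bool" where
  "sSt B S \<longleftrightarrow> St S \<and> young_le B S \<and> (\<forall>s. is_partition s \<longrightarrow> tot s \<and> young_le s S \<longrightarrow> young_le s B)"

definition bnd :: "nat list \<Rightarrow> nat list \<Rightarrow> nat list \<Rightarrow> nat list \<Rightarrow> nat list \<Rightarrow> bool" where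
  "bnd T A SB t x \<longleftrightarrow> (tot t \<and> young_le t x \<longrightarrow> young_le t A) \<and> (\<not> young_le T t \<and> young_le t x \<longrightarrow> young_le t SB)"

definition Bnd :: "nat list \<Rightarrow> nat list \<Rightarrow> nat list \<Rightarrow> nat list \<Rightarrow> bool" where
  "Bnd T A SB x \<longleftrightarrow> (\<forall>t. is_partition t \<longrightarrow> bnd T A SB t x)"

definition sR :: "nat list \<Rightarrow> nat list \<Rightarrow> nat list \<Rightarrow> nat list \<Rightarrow> bool" where
  "sR T A SB R \<longleftrightarrow> Bnd T A SB R \<and> (\<forall>x. is_partition x \<longrightarrow> Bnd T A SB x \<longrightarrow> young_le x R)"

lemma tp_inj: "tp a = tp b \<longleftrightarrow> a = b" by (simp add: tp_def)

lemma tp_le_tp: "young_le (tp a) (tp b) \<longleftrightarrow> a \<le> b" by (simp add: tp_le_iff fv_tp)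

lemma tot_part: "is_partition x \<Longrightarrow> tot x \<longleftrightarrow> (\<exists>k. x = tp k)" unfolding tot_def by (rule tot_iff)

lemma tp_le_11: "young_le (tp k) [1,1] \<longleftrightarrow> k \<le> 1" by (simp add: tp_le_iff fv_def)

lemma tot_tp: "tot (tp k)" using tot_part tp_part by blast

lemma part_antisym: "is_partition x \<Longrightarrow> is_partition y \<Longrightarrow> young_le x y \<Longrightarrow> young_le y x \<Longrightarrow> x = y"
  using part_le_iff part_eq le_antisym by metis

lemma sT2_iff: assumes "is_partition T" shows "sT2 T \<longleftrightarrow> T = tp 2"
proof
  assume H: "sT2 T"
  then obtain k where k: "T = tp k" using tot_part assms unfolding sT2_def by blast
  have "2 \<le> k" using H k tp_le_11 unfolding sT2_def by auto
  moreover have "k \<le> 2" using H k tp_le_11[of 2] tp_part[of 2] tot_tp[of 2] tp_le_tp unfolding sT2_def by auto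
  ultimately show "T = tp 2" using k by simp
next
  assume "T = tp 2"
  then show "sT2 T" unfolding sT2_def using tot_tp tp_le_11 tot_part tp_le_tp by auto
qed

lemma ltp_tp: "ltp (tp a) (tp b) \<longleftrightarrow> a < b" by (auto simp: ltp_def tp_le_tp tp_inj)

lemma sSucc_iff: assumes "is_partition A" shows "sSucc (tp a) A \<longleftrightarrow> A = tp (Suc a)"
proof
  assume H: "sSucc (tp a) A"
  then obtain k where k: "A = tp k" using tot_part assms unfolding sSucc_def by blast
  have "a < k" using H k ltp_tp unfolding sSucc_def by auto
  moreover have "k \<le> Suc a" using H k ltp_tp[of a "Suc a"] tp_part[of "Suc a"] tot_tp[of "Suc a"] tp_le_tp unfolding sSucc_def by auto
  ultimately have "k = Suc a" by simp
  then show "A = tp (Suc a)" using k by simp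
next
  assume "A = tp (Suc a)"
  then show "sSucc (tp a) A" unfolding sSucc_def using tot_tp ltp_tp tot_part tp_le_tp by auto
qed

lemma tp_le_stair: "young_le (tp k) (stair n) \<longleftrightarrow> k \<le> n" by (simp add: tp_le_iff fv_stair)

lemma sSt_iff: assumes "is_partition S" shows "sSt (tp b) S \<longleftrightarrow> S = stair b"
proof
  assume H: "sSt (tp b) S"
  then obtain n where n: "S = stair n" using St_iff assms unfolding sSt_def by blast
  have "b \<le> n" using H n tp_le_stair unfolding sSt_def by auto
  moreover have "n \<le> b" using H n tp_le_stair[of n n] tp_part[of n] tot_tp[of n] tp_le_tp unfolding sSt_def by auto
  ultimately show "S = stair b" using n by simp
next
  assume "S = stair b"
  then show "sSt (tp b) S" unfolding sSt_def using stair_St tp_le_stair tot_part tp_le_tp by auto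
qed

definition rect :: "nat \<Rightarrow> nat \<Rightarrow> nat list" where "rect p q = replicate q p"

lemma rect_part: "0 < p \<Longrightarrow> is_partition (rect p q)"
  by (simp add: rect_def is_partition_def sorted_wrt_iff_nth_less)

lemma fv_rect: "fv (rect p q) i = (if i < q then p else 0)" by (simp add: rect_def fv_def)

lemma le_rect: assumes px: "is_partition x"
  shows "young_le x (rect p q) \<longleftrightarrow> fv x 0 \<le> p \<and> length x \<le> q"
proof -
  have "young_le x (rect p q) \<longleftrightarrow> (\<forall>i. fv x i \<le> (if i < q then p else 0))"
    using part_le_iff[OF px] fv_rect by simp
  also have "\<dots> \<longleftrightarrow> fv x 0 \<le> p \<and> length x \<le> q"
  proof
    assume H: "\<forall>i. fv x i \<le> (if i < q then p else 0)"
    have l: "length x \<le> q"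
    proof (rule ccontr)
      assume "\<not> length x \<le> q"
      then have "0 < fv x q" using part_pos[OF px, of q] by (simp add: fv_def)
      then show False using H[rule_format, of q] by simp
    qed
    have "fv x 0 \<le> p"
    proof (cases "0 < q")
      case True then show ?thesis using H[rule_format, of 0] by simp
    next
      case False then show ?thesis using l by (simp add: fv_def)
    qed
    then show "fv x 0 \<le> p \<and> length x \<le> q" using l by simp
  next
    assume H: "fv x 0 \<le> p \<and> length x \<le> q"
    show "\<forall>i. fv x i \<le> (if i < q then p else 0)"
    proof
      fix i show "fv x i \<le> (if i < q then p else 0)"
        using H part_mono[OF px, of 0 i] fv_zero[of x i] by auto
    qed
  qed
  finally show ?thesis .
qed

definition col :: "nat \<Rightarrow> nat list" where "col k = replicate k 1"

lemma col_part: "is_partition (col k)" by (simp add: col_def is_partition_def sorted_wrt_iff_nth_less)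

lemma col_char: assumes pt: "is_partition t" shows "\<not> young_le (tp 2) t \<longleftrightarrow> t = col (length t)"
proof
  assume "\<not> young_le (tp 2) t"
  then have t0: "fv t 0 \<le> 1" using tp_le_iff by simp
  show "t = col (length t)"
  proof (rule nth_equalityI)
    show "length t = length (col (length t))" by (simp add: col_def)
    fix i assume i: "i < length t"
    have "fv t i \<le> fv t 0" using part_mono[OF pt] by simp
    then have "t!i \<le> 1" using t0 i by (simp add: fv_def)
    moreover have "0 < t!i" using part_pos[OF pt i] .
    ultimately show "t!i = col (length t) ! i" using i by (simp add: col_def)
  qed
next
  assume "t = col (length t)"
  then have "fv t 0 \<le> 1" by (metis col_def fv_def le_refl nth_replicate zero_le)
  then show "\<not> young_le (tp 2) t" using tp_le_iff by simp
qed

lemma col_le: assumes px: "is_partition x" shows "young_le (col k) x \<longleftrightarrow> k \<le> length x"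
  using part_pos[OF px] by (auto simp: young_le_def col_def Suc_le_eq)

lemma col_le_stair: "young_le (col k) (stair n) \<longleftrightarrow> k \<le> n"
  using col_le[OF stair_part] by (simp add: stair_def)

lemma Bnd_iff:
  assumes px: "is_partition x" and p: "0 < p"
  shows "Bnd (tp 2) (tp p) (stair q) x \<longleftrightarrow> young_le x (rect p q)"
proof -
  have A: "(\<forall>t. is_partition t \<longrightarrow> tot t \<and> young_le t x \<longrightarrow> young_le t (tp p)) \<longleftrightarrow> fv x 0 \<le> p"
  proof
    assume H: "\<forall>t. is_partition t \<longrightarrow> tot t \<and> young_le t x \<longrightarrow> young_le t (tp p)"
    show "fv x 0 \<le> p" using H[rule_format, of "tp (fv x 0)"] tp_part tot_tp tp_le_iff tp_le_tp by simp
  next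
    assume H: "fv x 0 \<le> p"
    show "\<forall>t. is_partition t \<longrightarrow> tot t \<and> young_le t x \<longrightarrow> young_le t (tp p)"
      using H tot_part tp_le_iff tp_le_tp by auto
  qed
  have B: "(\<forall>t. is_partition t \<longrightarrow> \<not> young_le (tp 2) t \<and> young_le t x \<longrightarrow> young_le t (stair q)) \<longleftrightarrow> length x \<le> q"
  proof
    assume H: "\<forall>t. is_partition t \<longrightarrow> \<not> young_le (tp 2) t \<and> young_le t x \<longrightarrow> young_le t (stair q)"
    have "\<not> young_le (tp 2) (col (length x))" using col_char[OF col_part] by (simp add: col_def)
    then show "length x \<le> q" using H[rule_format, of "col (length x)"] col_part col_le[OF px] col_le_stair by simp
  next
    assume H: "length x \<le> q"
    show "\<forall>t. is_partition t \<longrightarrow> \<not> young_le (tp 2) t \<and> young_le t x \<longrightarrow> young_le t (stair q)"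
    proof (intro allI impI)
      fix t assume pt: "is_partition t" and h: "\<not> young_le (tp 2) t \<and> young_le t x"
      then have "t = col (length t)" using col_char by blast
      moreover have "length t \<le> length x" using h by (simp add: young_le_def)
      ultimately show "young_le t (stair q)" using col_le_stair H by (metis le_trans)
    qed
  qed
  have "Bnd (tp 2) (tp p) (stair q) x \<longleftrightarrow> fv x 0 \<le> p \<and> length x \<le> q"
    unfolding Bnd_def bnd_def using A B by blast
  then show ?thesis using le_rect[OF px] by simp
qed

lemma sR_iff:
  assumes pR: "is_partition R" and p: "0 < p"
  shows "sR (tp 2) (tp p) (stair q) R \<longleftrightarrow> R = rect p q"
proof
  assume H: "sR (tp 2) (tp p) (stair q) R"
  have 1: "young_le R (rect p q)" using H Bnd_iff[OF pR p] unfolding sR_def by blast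
  have "young_le (rect p q) (rect p q)" by (simp add: young_le_def)
  then have "Bnd (tp 2) (tp p) (stair q) (rect p q)" using Bnd_iff[OF rect_part[OF p] p] by simp
  then have 2: "young_le (rect p q) R" using H rect_part[OF p] unfolding sR_def by blast
  show "R = rect p q" using part_antisym[OF pR rect_part[OF p] 1 2] .
next
  assume e: "R = rect p q"
  have "young_le (rect p q) (rect p q)" by (simp add: young_le_def)
  then show "sR (tp 2) (tp p) (stair q) R" unfolding sR_def using e Bnd_iff[OF _ p] rect_part[OF p] by blast
qed

lemma rect_le_stair: assumes "0 < p" "0 < q"
  shows "young_le (rect p q) (stair n) \<longleftrightarrow> p + q \<le> n + 1"
proof -
  have "young_le (rect p q) (stair n) \<longleftrightarrow> (\<forall>i. (if i < q then p else 0) \<le> n - i)"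
    using part_le_iff[OF rect_part[OF assms(1)]] fv_rect fv_stair by simp
  also have "\<dots> \<longleftrightarrow> p + q \<le> n + 1"
  proof
    assume "\<forall>i. (if i < q then p else 0) \<le> n - i"
    then have "p \<le> n - (q - 1)" using assms(2) by (metis diff_less less_one)
    then show "p + q \<le> n + 1" using assms by linarith
  next
    assume "p + q \<le> n + 1"
    then show "\<forall>i. (if i < q then p else 0) \<le> n - i" by auto
  qed
  finally show ?thesis .
qed



definition nT2 where
  "nT2 T s \<longleftrightarrow> \<not> tot T \<or> young_le T [1,1] \<or> (tot s \<and> \<not> young_le s [1,1] \<and> \<not> young_le T s)"
definition nSucc where
  "nSucc r A s \<longleftrightarrow> \<not> tot A \<or> \<not> ltp r A \<or> (tot s \<and> ltp r s \<and> \<not> young_le A s)"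
definition nSt where
  "nSt B S s u v w \<longleftrightarrow> (ltp u v \<and> ltp v S \<and> (\<not> (ltp u w \<and> ltp w S) \<or> w = v))
     \<or> \<not> young_le B S \<or> (tot s \<and> young_le s S \<and> \<not> young_le s B)"
definition nR where
  "nR T A SB R s x tt \<longleftrightarrow> \<not> bnd T A SB s R \<or> (bnd T A SB tt x \<and> \<not> young_le x R)"
definition rel where
  "rel R D1 D0 \<longleftrightarrow> young_le R D1 \<and> \<not> young_le R D0"

definition Mh where
  "Mh r sg p T A1 B1 C1 SB R D1 D0 s u v x wB w1 w0 tt \<longleftrightarrow>
     tot r \<and> tot sg \<and> tot p \<and>
     (nT2 T s \<or> nSucc r A1 s \<or> nSucc sg B1 s \<or> nSucc p C1 s \<or>
      nSt B1 SB s u v wB \<or> nSt C1 D1 s u v w1 \<or> nSt p D0 s u v w0 \<or>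
      nR T A1 SB R s x tt \<or> rel R D1 D0)"

definition Phi where
  "Phi r sg p \<longleftrightarrow> (\<forall>T A1 B1 C1 SB R D1 D0.
     is_partition T \<and> is_partition A1 \<and> is_partition B1 \<and> is_partition C1 \<and>
     is_partition SB \<and> is_partition R \<and> is_partition D1 \<and> is_partition D0 \<longrightarrow>
     (\<exists>s u v x. is_partition s \<and> is_partition u \<and> is_partition v \<and> is_partition x \<and>
       (\<forall>wB w1 w0 tt. is_partition wB \<and> is_partition w1 \<and> is_partition w0 \<and> is_partition tt \<longrightarrow>
          Mh r sg p T A1 B1 C1 SB R D1 D0 s u v x wB w1 w0 tt)))"

definition target where
  "target r sg p \<longleftrightarrow> total_part r \<and> total_part sg \<and> total_part p \<and> psize r + psize sg = psize p"

lemma part_nil: "is_partition []" by (simp add: is_partition_def)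

lemma refT2: "sT2 T \<Longrightarrow> is_partition s \<Longrightarrow> \<not> nT2 T s"
  unfolding sT2_def nT2_def by blast
lemma refSucc: "sSucc r A \<Longrightarrow> is_partition s \<Longrightarrow> \<not> nSucc r A s"
  unfolding sSucc_def nSucc_def by blast
lemma refSt: assumes "sSt B S" "is_partition s" "is_partition u" "is_partition v"
  shows "\<exists>w. is_partition w \<and> \<not> nSt B S s u v w"
proof -
  have st: "St S" and b1: "young_le B S" and b2: "\<not> (tot s \<and> young_le s S \<and> \<not> young_le s B)"
    using assms unfolding sSt_def by auto
  have "\<not> Dom u v S" using st assms(3,4) unfolding St_def by blast
  then have "\<not> ltp u v \<or> \<not> ltp v S \<or> (\<exists>w. is_partition w \<and> ltp u w \<and> ltp w S \<and> w \<noteq> v)"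
    unfolding Dom_def by blast
  then obtain w where "is_partition w" "\<not> (ltp u v \<and> ltp v S \<and> (\<not> (ltp u w \<and> ltp w S) \<or> w = v))"
    using part_nil by blast
  then show ?thesis using b1 b2 unfolding nSt_def by blast
qed
lemma refR: "sR T A SB R \<Longrightarrow> is_partition s \<Longrightarrow> is_partition x \<Longrightarrow>
   \<exists>tt. is_partition tt \<and> \<not> nR T A SB R s x tt"
  unfolding sR_def nR_def Bnd_def using part_nil by blast

lemma failT2: "\<not> sT2 T \<Longrightarrow> \<exists>s. is_partition s \<and> nT2 T s"
  unfolding sT2_def nT2_def using part_nil by blast
lemma failSucc: "\<not> sSucc r A \<Longrightarrow> \<exists>s. is_partition s \<and> nSucc r A s"
  unfolding sSucc_def nSucc_def using part_nil by blast
lemma failSt: assumes "\<not> sSt B S" shows "\<exists>s u v. is_partition s \<and> is_partition u \<and> is_partition v \<and>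
    (\<forall>w. is_partition w \<longrightarrow> nSt B S s u v w)"
proof -
  consider "\<not> St S" | "\<not> young_le B S" | "\<exists>s. is_partition s \<and> tot s \<and> young_le s S \<and> \<not> young_le s B"
    using assms unfolding sSt_def by blast
  then show ?thesis
  proof cases
    case 1
    then obtain u v where "is_partition u" "is_partition v" "Dom u v S" unfolding St_def by blast
    then show ?thesis unfolding nSt_def Dom_def using part_nil by blast
  next
    case 2 then show ?thesis unfolding nSt_def using part_nil by blast
  next
    case 3 then show ?thesis unfolding nSt_def using part_nil by blast
  qed
qed
lemma failR: "\<not> sR T A SB R \<Longrightarrow> \<exists>s x. is_partition s \<and> is_partition x \<and>
    (\<forall>tt. is_partition tt \<longrightarrow> nR T A SB R s x tt)"
  unfolding sR_def nR_def Bnd_def using part_nil by blast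

lemma tot_total: assumes "is_partition x" shows "tot x \<longleftrightarrow> total_part x"
proof -
  have "tot x \<longleftrightarrow> (\<exists>k. x = tp k)" using tot_part[OF assms] .
  also have "\<dots> \<longleftrightarrow> length x \<le> 1"
  proof
    assume "\<exists>k. x = tp k" then show "length x \<le> 1" by (auto simp: tp_def)
  next
    assume "length x \<le> 1" then show "\<exists>k. x = tp k"
      using part_pos[OF assms, of 0] by (cases x) (auto simp: tp_def intro!: exI[of _ "x!0"])
  qed
  finally show ?thesis unfolding total_part_def .
qed

lemma psize_tp: "psize (tp k) = k" by (simp add: psize_def tp_def)

lemma main_equiv:
  assumes pr: "is_partition r" and ps: "is_partition sg" and pp: "is_partition p"
  shows "Phi r sg p \<longleftrightarrow> target r sg p"
proof
  assume H: "Phi r sg p"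
  have H': "\<exists>s u v x. is_partition s \<and> is_partition u \<and> is_partition v \<and> is_partition x \<and>
       (\<forall>wB w1 w0 tt. is_partition wB \<and> is_partition w1 \<and> is_partition w0 \<and> is_partition tt \<longrightarrow>
          Mh r sg p T A1 B1 C1 SB R D1 D0 s u v x wB w1 w0 tt)"
    if "is_partition T" "is_partition A1" "is_partition B1" "is_partition C1"
     "is_partition SB" "is_partition R" "is_partition D1" "is_partition D0" for T A1 B1 C1 SB R D1 D0
    using H[unfolded Phi_def, rule_format, of T A1 B1 C1 SB R D1 D0] that by simp
  obtain s u v x where "\<forall>wB w1 w0 tt. is_partition wB \<and> is_partition w1 \<and> is_partition w0 \<and> is_partition tt \<longrightarrow>
          Mh r sg p [] [] [] [] [] [] [] [] s u v x wB w1 w0 tt"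
    using H'[OF part_nil part_nil part_nil part_nil part_nil part_nil part_nil part_nil] by blast
  then have "Mh r sg p [] [] [] [] [] [] [] [] s u v x [] [] [] []" using part_nil by blast
  then have tt: "tot r" "tot sg" "tot p" unfolding Mh_def by auto
  obtain a where a: "r = tp a" using tt(1) tot_part[OF pr] by blast
  obtain b where b: "sg = tp b" using tt(2) tot_part[OF ps] by blast
  obtain c where c: "p = tp c" using tt(3) tot_part[OF pp] by blast
  note abc = a b c
  define T where "T = tp 2"
  define A1 where "A1 = tp (Suc a)"
  define B1 where "B1 = tp (Suc b)"
  define C1 where "C1 = tp (Suc c)"
  define SB where "SB = stair (Suc b)"
  define R where "R = rect (Suc a) (Suc b)"
  define D1 where "D1 = stair (Suc c)"
  define D0 where "D0 = stair c"
  have parts: "is_partition T" "is_partition A1" "is_partition B1" "is_partition C1"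
     "is_partition SB" "is_partition R" "is_partition D1" "is_partition D0"
    unfolding T_def A1_def B1_def C1_def SB_def R_def D1_def D0_def
    using tp_part stair_part rect_part by auto
  have s1: "sT2 T" using sT2_iff[OF parts(1)] T_def by simp
  have s2: "sSucc r A1" using sSucc_iff[OF parts(2)] A1_def abc by simp
  have s3: "sSucc sg B1" using sSucc_iff[OF parts(3)] B1_def abc by simp
  have s4: "sSucc p C1" using sSucc_iff[OF parts(4)] C1_def abc by simp
  have s5: "sSt B1 SB" using sSt_iff[OF parts(5)] B1_def SB_def by simp
  have s6: "sSt C1 D1" using sSt_iff[OF parts(7)] C1_def D1_def by simp
  have s7: "sSt p D0" using sSt_iff[OF parts(8)] D0_def abc by simp
  have s8: "sR T A1 SB R" using sR_iff[OF parts(6)] T_def A1_def SB_def R_def by simp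
  obtain s u v x where X: "is_partition s" "is_partition u" "is_partition v" "is_partition x"
    and HY: "\<forall>wB w1 w0 tt. is_partition wB \<and> is_partition w1 \<and> is_partition w0 \<and> is_partition tt \<longrightarrow>
          Mh r sg p T A1 B1 C1 SB R D1 D0 s u v x wB w1 w0 tt"
    using H'[OF parts] by blast
  obtain wB where wB: "is_partition wB" "\<not> nSt B1 SB s u v wB" using refSt[OF s5 X(1-3)] by blast
  obtain w1 where w1: "is_partition w1" "\<not> nSt C1 D1 s u v w1" using refSt[OF s6 X(1-3)] by blast
  obtain w0 where w0: "is_partition w0" "\<not> nSt p D0 s u v w0" using refSt[OF s7 X(1-3)] by blast
  obtain t where t: "is_partition t" "\<not> nR T A1 SB R s x t" using refR[OF s8 X(1) X(4)] by blast
  have "Mh r sg p T A1 B1 C1 SB R D1 D0 s u v x wB w1 w0 t" using HY wB w1 w0 t by blast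
  then have "rel R D1 D0" unfolding Mh_def
    using refT2[OF s1 X(1)] refSucc[OF s2 X(1)] refSucc[OF s3 X(1)] refSucc[OF s4 X(1)] wB w1 w0 t
    by blast
  then have "Suc a + Suc b \<le> Suc c + 1" "\<not> Suc a + Suc b \<le> c + 1"
    unfolding rel_def R_def D1_def D0_def using rect_le_stair[of "Suc a" "Suc b"] by simp_all
  then have "a + b = c" by simp
  then show "target r sg p" unfolding target_def using tt tot_total pr ps pp abc psize_tp by simp
next
  assume tg: "target r sg p"
  have tt: "tot r" "tot sg" "tot p" using tg tot_total pr ps pp unfolding target_def by auto
  obtain a where a: "r = tp a" using tt(1) tot_part[OF pr] by blast
  obtain b where b: "sg = tp b" using tt(2) tot_part[OF ps] by blast
  obtain c where c: "p = tp c" using tt(3) tot_part[OF pp] by blast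
  note abc = a b c
  have sum: "a + b = c" using tg abc psize_tp unfolding target_def by simp
  show "Phi r sg p" unfolding Phi_def
  proof (intro allI impI)
    fix T A1 B1 C1 SB R D1 D0
    assume "is_partition T \<and> is_partition A1 \<and> is_partition B1 \<and> is_partition C1 \<and>
     is_partition SB \<and> is_partition R \<and> is_partition D1 \<and> is_partition D0"
    then have parts: "is_partition T" "is_partition A1" "is_partition B1" "is_partition C1"
     "is_partition SB" "is_partition R" "is_partition D1" "is_partition D0" by auto
    let ?M = "\<lambda>s u v x wB w1 w0 tt. Mh r sg p T A1 B1 C1 SB R D1 D0 s u v x wB w1 w0 tt"
    show "\<exists>s u v x. is_partition s \<and> is_partition u \<and> is_partition v \<and> is_partition x \<and>
       (\<forall>wB w1 w0 tt. is_partition wB \<and> is_partition w1 \<and> is_partition w0 \<and> is_partition tt \<longrightarrow>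
          ?M s u v x wB w1 w0 tt)"
    proof (cases "sT2 T \<and> sSucc r A1 \<and> sSucc sg B1 \<and> sSucc p C1 \<and> sSt B1 SB \<and> sSt C1 D1 \<and> sSt p D0 \<and> sR T A1 SB R")
      case True
      then have e: "T = tp 2" "A1 = tp (Suc a)" "B1 = tp (Suc b)" "C1 = tp (Suc c)" "D0 = stair c"
        using sT2_iff[OF parts(1)] sSucc_iff[OF parts(2)] sSucc_iff[OF parts(3)] sSucc_iff[OF parts(4)]
          sSt_iff[OF parts(8)] abc by auto
      then have e2: "SB = stair (Suc b)" "D1 = stair (Suc c)"
        using True sSt_iff[OF parts(5)] sSt_iff[OF parts(7)] by auto
      then have e3: "R = rect (Suc a) (Suc b)" using True e sR_iff[OF parts(6)] by auto
      have "rel R D1 D0" unfolding rel_def e e2 e3 using rect_le_stair[of "Suc a" "Suc b"] sum by simp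
      then show ?thesis using tt part_nil unfolding Mh_def by blast
    next
      case False
      then consider "\<not> sT2 T" | "\<not> sSucc r A1" | "\<not> sSucc sg B1" | "\<not> sSucc p C1"
        | "\<not> sSt B1 SB" | "\<not> sSt C1 D1" | "\<not> sSt p D0" | "\<not> sR T A1 SB R" by blast
      then show ?thesis
      proof cases
        case 1 then obtain s where "is_partition s" "nT2 T s" using failT2 by blast
        then show ?thesis using tt part_nil unfolding Mh_def by blast
      next
        case 2 then obtain s where "is_partition s" "nSucc r A1 s" using failSucc by blast
        then show ?thesis using tt part_nil unfolding Mh_def by blast
      next
        case 3 then obtain s where "is_partition s" "nSucc sg B1 s" using failSucc by blast
        then show ?thesis using tt part_nil unfolding Mh_def by blast
      next
        case 4 then obtain s where "is_partition s" "nSucc p C1 s" using failSucc by blast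
        then show ?thesis using tt part_nil unfolding Mh_def by blast
      next
        case 5 then obtain s u v where "is_partition s" "is_partition u" "is_partition v"
          "\<forall>w. is_partition w \<longrightarrow> nSt B1 SB s u v w" using failSt by blast
        then show ?thesis using tt part_nil unfolding Mh_def by blast
      next
        case 6 then obtain s u v where "is_partition s" "is_partition u" "is_partition v"
          "\<forall>w. is_partition w \<longrightarrow> nSt C1 D1 s u v w" using failSt by blast
        then show ?thesis using tt part_nil unfolding Mh_def by blast
      next
        case 7 then obtain s u v where "is_partition s" "is_partition u" "is_partition v"
          "\<forall>w. is_partition w \<longrightarrow> nSt p D0 s u v w" using failSt by blast
        then show ?thesis using tt part_nil unfolding Mh_def by blast
      next
        case 8 then obtain s x where "is_partition s" "is_partition x"
          "\<forall>t. is_partition t \<longrightarrow> nR T A1 SB R s x t" using failR by blast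
        then show ?thesis using tt part_nil unfolding Mh_def by blast
      qed
    qed
  qed
qed



definition fT :: "nat \<Rightarrow> fm" where "fT i = Neg (Le C11 (Var i))"
definition fLt :: "nat \<Rightarrow> nat \<Rightarrow> fm" where "fLt a b = Conj (Le (Var a) (Var b)) (Neg (Eq (Var a) (Var b)))"
definition fImp :: "fm \<Rightarrow> fm \<Rightarrow> fm" where "fImp f g = Disj (Neg f) g"
definition fnT2 where
  "fnT2 T s = Disj (Neg (fT T)) (Disj (Le (Var T) C11) (Conj (fT s) (Conj (Neg (Le (Var s) C11)) (Neg (Le (Var T) (Var s))))))"
definition fnSucc where
  "fnSucc r A s = Disj (Neg (fT A)) (Disj (Neg (fLt r A)) (Conj (fT s) (Conj (fLt r s) (Neg (Le (Var A) (Var s))))))"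
definition fnSt where
  "fnSt B S s u v w = Disj (Conj (fLt u v) (Conj (fLt v S) (Disj (Neg (Conj (fLt u w) (fLt w S))) (Eq (Var w) (Var v)))))
     (Disj (Neg (Le (Var B) (Var S))) (Conj (fT s) (Conj (Le (Var s) (Var S)) (Neg (Le (Var s) (Var B))))))"
definition fbnd where
  "fbnd T A SB t x = Conj (fImp (Conj (fT t) (Le (Var t) (Var x))) (Le (Var t) (Var A)))
     (fImp (Conj (Neg (Le (Var T) (Var t))) (Le (Var t) (Var x))) (Le (Var t) (Var SB)))"
definition fnR where
  "fnR T A SB R s x tt = Disj (Neg (fbnd T A SB s R)) (Conj (fbnd T A SB tt x) (Neg (Le (Var x) (Var R))))"
definition frel where
  "frel R D1 D0 = Conj (Le (Var R) (Var D1)) (Neg (Le (Var R) (Var D0)))"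

definition Mfm where
  "Mfm = Conj (fT 0) (Conj (fT 1) (Conj (fT 2) (Disj (fnT2 3 11) (Disj (fnSucc 0 4 11) (Disj (fnSucc 1 5 11)
     (Disj (fnSucc 2 6 11) (Disj (fnSt 5 7 11 12 13 15) (Disj (fnSt 6 9 11 12 13 16)
     (Disj (fnSt 2 10 11 12 13 17) (Disj (fnR 3 4 7 8 11 14 18) (frel 8 9 10)))))))))))"

definition Fm where
  "Fm = Alls [3,4,5,6,7,8,9,10] (Exs [11,12,13,14] (Alls [15,16,17,18] Mfm))"

lemma s_fT: "sat e (fT i) = tot (e i)" by (simp add: fT_def tot_def)
lemma s_fLt: "sat e (fLt a b) = ltp (e a) (e b)" by (simp add: fLt_def ltp_def)
lemma s_fImp: "sat e (fImp f g) = (sat e f \<longrightarrow> sat e g)" by (simp add: fImp_def)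
lemma s_fnT2: "sat e (fnT2 T s) = nT2 (e T) (e s)" by (simp add: fnT2_def nT2_def s_fT)
lemma s_fnSucc: "sat e (fnSucc r A s) = nSucc (e r) (e A) (e s)" by (simp add: fnSucc_def nSucc_def s_fT s_fLt)
lemma s_fnSt: "sat e (fnSt B S s u v w) = nSt (e B) (e S) (e s) (e u) (e v) (e w)"
  by (simp add: fnSt_def nSt_def s_fT s_fLt)
lemma s_fbnd: "sat e (fbnd T A SB t x) = bnd (e T) (e A) (e SB) (e t) (e x)"
  by (simp add: fbnd_def bnd_def s_fT s_fImp)
lemma s_fnR: "sat e (fnR T A SB R s x tt) = nR (e T) (e A) (e SB) (e R) (e s) (e x) (e tt)"
  by (simp add: fnR_def nR_def s_fbnd)
lemma s_frel: "sat e (frel R D1 D0) = rel (e R) (e D1) (e D0)" by (simp add: frel_def rel_def)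

lemma s_Mfm: "sat e Mfm = Mh (e 0) (e 1) (e 2) (e 3) (e 4) (e 5) (e 6) (e 7) (e 8) (e 9) (e 10)
   (e 11) (e 12) (e 13) (e 14) (e 15) (e 16) (e 17) (e 18)"
  unfolding Mfm_def Mh_def by (simp only: sat.simps s_fT s_fnT2 s_fnSucc s_fnSt s_fnR s_frel)

lemma qf: "qfree Mfm"
  by (simp add: Mfm_def fT_def fLt_def fImp_def fnT2_def fnSucc_def fnSt_def fbnd_def fnR_def frel_def)

lemma pi_Fm: "pi_fm 3 Fm"
proof -
  have "pi_fm (Suc 0) (Alls [15,16,17,18] Mfm)" by (rule piS, rule sigma0, rule qf)
  then have "sigma_fm (Suc (Suc 0)) (Exs [11,12,13,14] (Alls [15,16,17,18] Mfm))" by (rule sigmaS)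
  then have "pi_fm (Suc (Suc (Suc 0))) Fm" unfolding Fm_def by (rule piS)
  then show ?thesis by (simp add: numeral_3_eq_3)
qed

lemma sat_Fm: "sat e Fm \<longleftrightarrow> Phi (e 0) (e 1) (e 2)"
  unfolding Fm_def Alls_def Exs_def Phi_def by (simp add: s_Mfm imp_conjL)


theorem proposition3p10:
  shows "pi_definable3 3 (\<lambda>\<rho> \<sigma> \<pi>. total_part \<rho> \<and> total_part \<sigma> \<and> total_part \<pi> \<and> psize \<rho> + psize \<sigma> = psize \<pi>)"
  unfolding pi_definable3_def
proof (intro exI conjI allI impI)
  show "pi_fm 3 Fm" by (rule pi_Fm)
  fix e :: "nat \<Rightarrow> nat list" assume H: "\<forall>i. is_partition (e i)"
  have "sat e Fm \<longleftrightarrow> target (e 0) (e 1) (e 2)"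
    using sat_Fm main_equiv H by blast
  then show "sat e Fm \<longleftrightarrow> total_part (e 0) \<and> total_part (e 1) \<and> total_part (e 2) \<and> psize (e 0) + psize (e 1) = psize (e 2)"
    unfolding target_def .
qed

end
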